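(* Let $k_+,k_-$ be integers with $0\leq k_-\leq k_+\leq 3$ and $k_++k_-\geq 1$, and set $\alpha \triangleq \max\{2k_+^2,3\}$. Let $D \geq 2$ and $K\geq 1$ be integers, and let $p\equiv\pm 5\pmod{12}$ be a prime such that $(\alpha K+1)^D \leq p$. For each integer $0\leq m < DK^2$ define \[C_m\triangleq \Big\{ x= \sum_{i=0}^{D-1} x_i (\alpha K+1)^i : x_i\in\mathbb{Z},\ 0\leq x_i\leq K,\ \sum_{i=0}^{D-1}x_i^2=m \Big\}. \] Let $G \triangleq \mathbb{Z}_{3k_++2k_-+1} \times \mathbb{Z}_p\times \mathbb{Z}_p$ and \[ S_m\triangleq \{ s_x : x \in C_m \}, \quad \text{where } s_x \triangleq (1,x \bmod p,x^2 \bmod p) \in G.\] Then $G\geq M\diamond_2 S_m$ for every $0\leq m < DK^2$, where $M\triangleq [-k_-,k_+]^*$.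
   Context: $[a,b]=\{a,a+1,\dots,b\}$ and $[a,b]^*=[a,b]\setminus\{0\}$. For a finite Abelian group $G$, a finite set $M\subseteq\mathbb{Z}\setminus\{0\}$ and $S=\{s_1,\dots,s_n\}\subseteq G$, we write $G\ge M\diamond_t S$ if the elements $\mathbf{e}\cdot(s_1,\dots,s_n)=\sum_i e_is_i$, over all $\mathbf{e}\in(M\cup\{0\})^n$ with $1\le\mathrm{wt}(\mathbf{e})\le t$, are all distinct and non-zero in $G$ (here $e_is_i$ is the $e_i$-fold group multiple and $\mathrm{wt}$ the Hamming weight). *)

theory Defs
  imports "HOL-Algebra.Algebra"
begin

definition adm_coeffs :: "int set \<Rightarrow> nat \<Rightarrow> 'a set \<Rightarrow> ('a \<Rightarrow> int) set" where
  "adm_coeffs M t S = {e \<in> S \<rightarrow>\<^sub>E (M \<union> {0}).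
      1 \<le> card {s \<in> S. e s \<noteq> 0} \<and> card {s \<in> S. e s \<noteq> 0} \<le> t}"

text \<open>The linear combination e . (s_1,...,s_n) = sum of e_i-fold multiples, written
  multiplicatively in the HOL-Algebra group G.\<close>
definition lin_comb :: "('a, 'b) monoid_scheme \<Rightarrow> ('a \<Rightarrow> int) \<Rightarrow> 'a set \<Rightarrow> 'a" where
  "lin_comb G e S = finprod G (\<lambda>s. s [^]\<^bsub>G\<^esub> (e s)) S"

definition diamond_ge :: "('a, 'b) monoid_scheme \<Rightarrow> int set \<Rightarrow> nat \<Rightarrow> 'a set \<Rightarrow> bool" where
  "diamond_ge G M t S \<longleftrightarrow> finite S \<and> S \<subseteq> carrier G \<and>
     (\<forall>e \<in> adm_coeffs M t S. lin_comb G e S \<noteq> \<one>\<^bsub>G\<^esub>) \<and>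
     (\<forall>e \<in> adm_coeffs M t S. \<forall>e' \<in> adm_coeffs M t S.
        e \<noteq> e' \<longrightarrow> lin_comb G e S \<noteq> lin_comb G e' S)"

end

theory Submission
  imports Defs "HOL-Number_Theory.Number_Theory"
begin



lemma geom_sum_int: "(B::int) \<ge> 1 \<Longrightarrow> (\<Sum>i<D. (B - 1) * B ^ i) = B ^ D - 1"
  by (induction D) (auto simp: algebra_simps)

lemma digit_bound:
  assumes "(B::int) \<ge> 1" "\<forall>i<D. \<bar>c i\<bar> \<le> B - 1"
  shows "\<bar>\<Sum>i<D. c i * B ^ i\<bar> \<le> B ^ D - 1"
  using assms(2)
proof (induction D)
  case 0 then show ?case by simp
next
  case (Suc D)
  have "\<bar>\<Sum>i<Suc D. c i * B ^ i\<bar> \<le> \<bar>\<Sum>i<D. c i * B ^ i\<bar> + \<bar>c D * B ^ D\<bar>"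
    by (simp add: abs_triangle_ineq)
  also have "\<bar>c D * B ^ D\<bar> \<le> (B - 1) * B ^ D"
    using Suc.prems assms(1) by (simp add: abs_mult mult_right_mono)
  finally show ?case using Suc by (simp add: algebra_simps)
qed

lemma digits_zero:
  assumes "(B::int) \<ge> 2" "\<forall>i<D. \<bar>c i\<bar> \<le> B - 1" "(\<Sum>i<D. c i * B ^ i) = 0"
  shows "\<forall>i<D. c i = 0"
  using assms(2,3)
proof (induction D)
  case 0 then show ?case by simp
next
  case (Suc D)
  have b: "\<bar>\<Sum>i<D. c i * B ^ i\<bar> \<le> B ^ D - 1"
    using digit_bound[of B D c] Suc.prems assms(1) by simp
  have eq: "(\<Sum>i<D. c i * B ^ i) = - (c D * B ^ D)" using Suc.prems(2) by simp
  have cD: "c D = 0"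
  proof (rule ccontr)
    assume "c D \<noteq> 0"
    then have "\<bar>c D\<bar> \<ge> 1" by simp
    have pos: "B ^ D > 0" using assms(1) by simp
    have "\<bar>c D\<bar> * B ^ D \<ge> 1 * B ^ D"
      using \<open>\<bar>c D\<bar> \<ge> 1\<close> pos by (intro mult_right_mono) auto
    then have "\<bar>c D * B ^ D\<bar> \<ge> B ^ D" using pos by (simp add: abs_mult)
    then show False using b eq by simp
  qed
  have s0: "(\<Sum>i<D. c i * B ^ i) = 0" using eq cD by simp
  have pr: "\<forall>i<D. \<bar>c i\<bar> \<le> B - 1" using Suc.prems(1) by simp
  have "\<forall>i<D. c i = 0" using Suc.IH[OF pr s0] .
  then show ?case using cD less_Suc_eq by auto
qed

lemma digits_zero_mod:
  assumes "(B::int) \<ge> 2" "\<forall>i<D. \<bar>c i\<bar> \<le> B - 1" "p dvd (\<Sum>i<D. c i * B ^ i)" "B ^ D \<le> p"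
  shows "\<forall>i<D. c i = 0"
proof -
  have b: "\<bar>\<Sum>i<D. c i * B ^ i\<bar> < p" using digit_bound[of B D c] assms by simp
  have "(\<Sum>i<D. c i * B ^ i) = 0"
  proof (rule ccontr)
    assume ne: "(\<Sum>i<D. c i * B ^ i) \<noteq> 0"
    from assms(3) obtain t where t: "(\<Sum>i<D. c i * B ^ i) = p * t" by (auto simp: dvd_def)
    with ne have "t \<noteq> 0" by auto
    have pp: "p > 0" using b by simp
    have "\<bar>t\<bar> \<ge> 1" using \<open>t \<noteq> 0\<close> by simp
    then have "p * \<bar>t\<bar> \<ge> p * 1" using pp by (intro mult_left_mono) auto
    then have "\<bar>p * t\<bar> \<ge> p" using pp by (simp add: abs_mult)
    then show False using b t by simp
  qed
  then show ?thesis using digits_zero assms by blast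
qed

lemma line_lemma:
  fixes XX YY ZZ :: "nat \<Rightarrow> int"
  assumes "s \<noteq> 0" "\<forall>i<D. s * ZZ i = s * XX i - r * (XX i - YY i)"
    "(\<Sum>i<D. (XX i)\<^sup>2) = (\<Sum>i<D. (YY i)\<^sup>2)" "(\<Sum>i<D. (ZZ i)\<^sup>2) = (\<Sum>i<D. (XX i)\<^sup>2)"
  shows "(\<forall>i<D. ZZ i = XX i) \<or> (\<forall>i<D. ZZ i = YY i)"
proof -
  define n where "n = (\<Sum>i<D. (XX i - YY i)\<^sup>2)"
  define g where "g = (\<Sum>i<D. XX i * (XX i - YY i))"
  have "(\<Sum>i<D. (YY i)\<^sup>2) = (\<Sum>i<D. (XX i)\<^sup>2 - 2 * (XX i * (XX i - YY i)) + (XX i - YY i)\<^sup>2)"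
    by (rule sum.cong) (auto simp: power2_eq_square algebra_simps)
  also have "\<dots> = (\<Sum>i<D. (XX i)\<^sup>2) - 2 * g + n"
    by (simp add: g_def n_def sum.distrib sum_subtractf sum_distrib_left)
  finally have gn: "2 * g = n" using assms(3) by simp
  have "s\<^sup>2 * (\<Sum>i<D. (ZZ i)\<^sup>2) = (\<Sum>i<D. (s * ZZ i)\<^sup>2)"
    by (simp add: sum_distrib_left power_mult_distrib)
  also have "\<dots> = (\<Sum>i<D. (s * XX i - r * (XX i - YY i))\<^sup>2)"
    using assms(2) by (intro sum.cong) auto
  also have "\<dots> = (\<Sum>i<D. s\<^sup>2 * (XX i)\<^sup>2 - 2 * s * r * (XX i * (XX i - YY i)) + r\<^sup>2 * (XX i - YY i)\<^sup>2)"
    by (rule sum.cong) (auto simp: power2_eq_square algebra_simps)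
  also have "\<dots> = s\<^sup>2 * (\<Sum>i<D. (XX i)\<^sup>2) - 2 * s * r * g + r\<^sup>2 * n"
    by (simp add: g_def n_def sum.distrib sum_subtractf sum_distrib_left)
  finally have e1: "s\<^sup>2 * (\<Sum>i<D. (ZZ i)\<^sup>2) = s\<^sup>2 * (\<Sum>i<D. (XX i)\<^sup>2) - 2 * s * r * g + r\<^sup>2 * n" .
  then have e2: "2 * s * r * g = r\<^sup>2 * n" using assms(4) by simp
  have e3: "2 * s * r * g = s * r * n" using gn by (simp add: algebra_simps flip: gn)
  have "r * (r - s) * n = r\<^sup>2 * n - s * r * n" by (simp add: algebra_simps power2_eq_square)
  then have "r * (r - s) * n = 0" using e2 e3 by (simp only:)
  then consider "n = 0" | "r = 0" | "r = s" by auto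
  then show ?thesis
  proof cases
    case 1
    then have "\<forall>i<D. (XX i - YY i)\<^sup>2 = 0" unfolding n_def
      by (subst (asm) sum_nonneg_eq_0_iff) auto
    then show ?thesis using assms(1,2) by auto
  next
    case 2 then show ?thesis using assms(1,2) by auto
  next
    case 3 then show ?thesis using assms(1,2) by (auto simp: algebra_simps)
  qed
qed



lemma three_nonres:
  fixes p :: nat
  assumes "Factorial_Ring.prime p" "p mod 12 = 5 \<or> p mod 12 = 7"
  shows "\<not> QuadRes (int p) 3"
proof -
  have p3: "p > 3" "p \<noteq> 3" using assms(2) by auto
  have QR: "Legendre (int p) (int 3) * Legendre (int 3) (int p) = (-1::int) ^ ((p - 1) div 2 * ((3 - 1) div 2))"
    by (rule Quadratic_Reciprocity) (use assms p3 in auto)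
  have ex: "(p - 1) div 2 * ((3 - 1) div 2) = (p - 1) div 2" by simp
  have nz3: "\<not> [int p = 0] (mod 3)" using assms(2) by (auto simp: cong_def) presburger+
  have nzp: "\<not> [3 = 0] (mod int p)" using p3 by (auto simp: cong_def)
  from assms(2) show ?thesis
  proof
    assume h: "p mod 12 = 5"
    have nq: "\<not> QuadRes 3 (int p)"
    proof
      assume "QuadRes 3 (int p)"
      then obtain y where "[y\<^sup>2 = int p] (mod 3)" by (auto simp: QuadRes_def)
      then have "y\<^sup>2 mod 3 = 2" using h by (simp add: cong_def) presburger
      moreover have "y\<^sup>2 mod 3 = ((y mod 3)\<^sup>2) mod 3" by (simp add: power_mod)
      moreover have "y mod 3 \<in> {0,1,2}" by auto
      ultimately show False by (auto simp: power2_eq_square)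
    qed
    have L1: "Legendre (int p) 3 = -1" using nq nz3 by (simp add: Legendre_def)
    have "even ((p - 1) div 2)" using h by presburger
    then have "Legendre 3 (int p) = -1" using QR L1 ex by simp
    then show ?thesis using nzp by (auto simp: Legendre_def split: if_splits)
  next
    assume h: "p mod 12 = 7"
    have q: "QuadRes 3 (int p)" unfolding QuadRes_def
      by (rule exI[of _ 1]) (use h in \<open>simp add: cong_def; presburger\<close>)
    have L1: "Legendre (int p) 3 = 1" using q nz3 by (simp add: Legendre_def)
    have "odd ((p - 1) div 2)" using h by presburger
    then have "Legendre 3 (int p) = -1" using QR L1 ex by simp
    then show ?thesis using nzp by (auto simp: Legendre_def split: if_splits)
  qed
qed

lemma small_dvd: "(p::int) dvd t \<Longrightarrow> \<bar>t\<bar> < p \<Longrightarrow> t = 0"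
  using dvd_imp_le_int by force



lemma enum4_raw:
  "\<forall>a\<in>{-3,-2,-1,1,2,3::int}. \<forall>b\<in>{-3,-2,-1,1,2,3::int}. \<forall>c\<in>{-3,-2,-1,1,2,3::int}.
     (a + b - c) \<in> {-3,-2,-1,1,2,3} \<and> a + b \<noteq> 0 \<and> a * b * c * (a+b-c) > 0 \<longrightarrow>
     a * b * c * (a+b-c) \<in> {12,1,4,9,16,36,81}"
  by simp

lemma small_coef: "(a::int) \<noteq> 0 \<Longrightarrow> \<bar>a\<bar> \<le> 3 \<Longrightarrow> a \<in> {-3,-2,-1,1,2,3}"
  by auto

lemma enum4:
  fixes a b c d :: int
  assumes "a \<noteq> 0" "b \<noteq> 0" "c \<noteq> 0" "d \<noteq> 0" "\<bar>a\<bar> \<le> 3" "\<bar>b\<bar> \<le> 3" "\<bar>c\<bar> \<le> 3" "\<bar>d\<bar> \<le> 3"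
    "a + b = c + d" "a + b \<noteq> 0" "a * b * c * d > 0"
  shows "a * b * c * d = 12 \<or> (\<exists>t. t > 0 \<and> a * b * c * d = t * t)"
proof -
  have d: "d = a + b - c" using assms by simp
  have "a * b * c * (a+b-c) \<in> {12,1,4,9,16,36,81}"
  proof -
    have A: "a \<in> {-3,-2,-1,1,2,3}" "b \<in> {-3,-2,-1,1,2,3}" "c \<in> {-3,-2,-1,1,2,3}"
      "a + b - c \<in> {-3,-2,-1,1,2,3}"
      using small_coef[OF assms(1,5)] small_coef[OF assms(2,6)] small_coef[OF assms(3,7)]
        small_coef[OF assms(4,8)] d by auto
    have "a + b \<noteq> 0 \<and> a * b * c * (a+b-c) > 0" using assms(10,11) d by simp
    then show ?thesis using enum4_raw A by blast
  qed
  then have "a * b * c * d \<in> {12,1 * 1,2 * 2,3 * 3,4 * 4,6 * 6,9 * 9}" using d by simp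
  then have "a * b * c * d = 12 \<or> a * b * c * d = 1 * 1 \<or> a * b * c * d = 2 * 2 \<or> a * b * c * d = 3 * 3 \<or> a * b * c * d = 4 * 4 \<or> a * b * c * d = 6 * 6 \<or> a * b * c * d = 9 * 9"
    by (simp only: insert_iff empty_iff simp_thms)
  then show ?thesis by (metis zero_less_numeral zero_less_one)
qed



definition dval :: "int \<Rightarrow> nat \<Rightarrow> (nat \<Rightarrow> int) \<Rightarrow> int" where
  "dval B D XX = (\<Sum>i<D. XX i * B ^ i)"

lemma dval_lin4:
  "dval B D (\<lambda>i. a * XX i + b * YY i + c * ZZ i + d * WW i) =
     a * dval B D XX + b * dval B D YY + c * dval B D ZZ + d * dval B D WW"
  by (simp add: dval_def sum.distrib sum_distrib_left algebra_simps)

lemma dval_eqI: "\<forall>i<D. XX i = YY i \<Longrightarrow> dval B D XX = dval B D YY"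
  by (simp add: dval_def)

lemma dval_zero: "\<forall>i<D. XX i = 0 \<Longrightarrow> dval B D XX = 0"
  by (simp add: dval_def)

lemma prod_bound: "\<bar>e::int\<bar> \<le> k \<Longrightarrow> \<bar>u\<bar> \<le> K \<Longrightarrow> \<bar>e * u\<bar> \<le> k * K"
  by (simp add: abs_mult mult_mono')

lemma lin4_bound:
  fixes a b c d XX YY ZZ WW k K :: int
  assumes "\<bar>a\<bar> \<le> k" "\<bar>b\<bar> \<le> k" "\<bar>c\<bar> \<le> k" "\<bar>d\<bar> \<le> k"
    "0 \<le> XX" "XX \<le> K" "0 \<le> YY" "YY \<le> K" "0 \<le> ZZ" "ZZ \<le> K" "0 \<le> WW" "WW \<le> K" "a + b = c + d"
  shows "\<bar>a * XX + b * YY - c * ZZ - d * WW\<bar> \<le> 2 * k * K"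
proof -
  have h1: "\<bar>a * (2 * XX-K)\<bar> \<le> k * K" by (rule prod_bound) (use assms in auto)
  have h2: "\<bar>b * (2 * YY-K)\<bar> \<le> k * K" by (rule prod_bound) (use assms in auto)
  have h3: "\<bar>c * (2 * ZZ-K)\<bar> \<le> k * K" by (rule prod_bound) (use assms in auto)
  have h4: "\<bar>d * (2 * WW-K)\<bar> \<le> k * K" by (rule prod_bound) (use assms in auto)
  have id: "2 * (a * XX + b * YY - c * ZZ - d * WW) = a * (2 * XX-K) + b * (2 * YY-K) - c * (2 * ZZ-K) - d * (2 * WW-K) + K * ((a+b)-(c+d))"
    by (simp add: algebra_simps)
  then have id2: "2 * (a * XX + b * YY - c * ZZ - d * WW) = a * (2 * XX-K) + b * (2 * YY-K) - c * (2 * ZZ-K) - d * (2 * WW-K)"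
    using assms(13) by simp
  have e: "2 * k * K = 2 * (k * K)" by simp
  show ?thesis unfolding e
  proof -
    define T where "T = a * XX + b * YY - c * ZZ - d * WW"
    define A1 where "A1 = a * (2 * XX-K)"
    define A2 where "A2 = b * (2 * YY-K)"
    define A3 where "A3 = c * (2 * ZZ-K)"
    define A4 where "A4 = d * (2 * WW-K)"
    define M where "M = k * K"
    have "2 * T = A1 + A2 - A3 - A4" using id2 unfolding T_def A1_def A2_def A3_def A4_def by simp
    moreover have "\<bar>A1\<bar> \<le> M" "\<bar>A2\<bar> \<le> M" "\<bar>A3\<bar> \<le> M" "\<bar>A4\<bar> \<le> M"
      using h1 h2 h3 h4 unfolding A1_def A2_def A3_def A4_def M_def by auto
    ultimately have "\<bar>T\<bar> \<le> 2 * M" by linarith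
    then show "\<bar>a * XX + b * YY - c * ZZ - d * WW\<bar> \<le> 2 * (k * K)" unfolding T_def M_def .
  qed
qed


lemma sup2:
  fixes p g x y :: int
  assumes "Factorial_Ring.prime p" "g \<noteq> 0" "\<bar>g\<bar> < p" "0 \<le> x" "x < p" "0 \<le> y" "y < p" "x \<noteq> y"
    "p dvd g * (x - y)"
  shows False
proof -
  from assms(9) have "p dvd g \<or> p dvd (x - y)" using prime_dvd_mult_iff[OF assms(1)] by blast
  then show False
  proof
    assume "p dvd g" then show False using small_dvd assms(2,3) by blast
  next
    assume "p dvd (x - y)"
    moreover have "\<bar>x - y\<bar> < p" using assms(4-7) unfolding abs_less_iff by linarith
    ultimately have "x - y = 0" by (rule small_dvd)
    then show False using assms(8) by simp
  qed
qed

lemma sup3: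
  fixes p a b c x y z :: int
  assumes "Factorial_Ring.prime p" "a \<noteq> 0" "c \<noteq> 0" "\<bar>a\<bar> < p" "\<bar>c\<bar> < p" "a + b + c = 0"
    "0 \<le> x" "x < p" "0 \<le> z" "z < p" "x \<noteq> z"
    "p dvd (a * x + b * y + c * z)" "p dvd (a * x\<^sup>2 + b * y\<^sup>2 + c * z\<^sup>2)"
  shows False
proof -
  define L where "L = a * x + b * y + c * z"
  define Q where "Q = a * x\<^sup>2 + b * y\<^sup>2 + c * z\<^sup>2"
  have cc: "c = -a-b" using assms(6) by simp
  have id: "a * c * (x-z)^2 = L * (L - 2 * a * (x-z)) - b * (Q - 2 * z * L)"
    unfolding L_def Q_def cc by (simp add: algebra_simps power2_eq_square)
  have "p dvd L * (L - 2 * a * (x-z)) - b * (Q - 2 * z * L)"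
    using assms(12,13) unfolding L_def[symmetric] Q_def[symmetric] by auto
  then have "p dvd a * c * (x-z)^2" using id by simp
  then have "p dvd a \<or> p dvd c \<or> p dvd (x - z)"
    using assms(1) by (simp add: prime_dvd_mult_iff prime_dvd_power_iff)
  then show False
  proof (elim disjE)
    assume "p dvd a" then show False using small_dvd assms(2,4) by blast
  next
    assume "p dvd c" then show False using small_dvd assms(3,5) by blast
  next
    assume "p dvd (x - z)"
    moreover have "\<bar>x - z\<bar> < p" using assms(7-10) unfolding abs_less_iff by linarith
    ultimately have "x - z = 0" by (rule small_dvd)
    then show False using assms(11) by simp
  qed
qed



lemma core4:
  fixes k K al B p m x y z w a b c d :: int and D :: nat and XX YY ZZ WW :: "nat \<Rightarrow> int"
  assumes k1: "1 \<le> k" and k3: "k \<le> 3" and K1: "1 \<le> K" and al1: "2 * k^2 \<le> al" and al2: "3 \<le> al"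
    and Bdef: "B = al * K+1" and pr: "Factorial_Ring.prime p" and BD: "B^D \<le> p" and p10: "10 \<le> p"
    and nqr: "\<not> QuadRes p 3"
    and dg: "\<forall>i<D. 0 \<le> XX i \<and> XX i \<le> K \<and> 0 \<le> YY i \<and> YY i \<le> K \<and> 0 \<le> ZZ i \<and> ZZ i \<le> K \<and> 0 \<le> WW i \<and> WW i \<le> K"
    and nX: "(\<Sum>i<D. (XX i)\<^sup>2) = m" and nY: "(\<Sum>i<D. (YY i)\<^sup>2) = m"
    and nZ: "(\<Sum>i<D. (ZZ i)\<^sup>2) = m" and nW: "(\<Sum>i<D. (WW i)\<^sup>2) = m"
    and xd: "x = dval B D XX" and yd: "y = dval B D YY" and zd: "z = dval B D ZZ" and wd: "w = dval B D WW"
    and dxy: "x \<noteq> y" and dzw: "z \<noteq> w" and dzx: "z \<noteq> x" and dzy: "z \<noteq> y"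
    and nz: "a \<noteq> 0" "b \<noteq> 0" "c \<noteq> 0" "d \<noteq> 0"
    and ab: "\<bar>a\<bar> \<le> k" "\<bar>b\<bar> \<le> k" "\<bar>c\<bar> \<le> k" "\<bar>d\<bar> \<le> k"
    and sig: "a + b = c + d"
    and m1: "p dvd (a * x + b * y) - (c * z + d * w)"
    and m2: "p dvd (a * x\<^sup>2 + b * y\<^sup>2) - (c * z\<^sup>2 + d * w\<^sup>2)"
  shows False
proof -
  have kk: "k \<le> k^2" using k1 by (simp add: power2_eq_square)
  have B1: "B - 1 = al * K" using Bdef by simp
  have B2: "B \<ge> 2" using Bdef al2 K1 by (smt (verit) mult_le_cancel_right1)
  have kK: "2 * k * K \<le> B - 1" unfolding B1 using al1 kk K1 by (intro mult_right_mono) auto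
  have k2K: "2 * k^2 * K \<le> B - 1" unfolding B1 using al1 K1 by (intro mult_right_mono) auto
  have KK: "2 * K \<le> B - 1" unfolding B1 using al2 K1 by (intro mult_right_mono) auto
  have Bpos: "B \<ge> 1" using B2 by simp
  have rng: "0 \<le> dval B D V \<and> dval B D V < p" if "\<forall>i<D. 0 \<le> V i \<and> V i \<le> K" for V :: "nat \<Rightarrow> int"
  proof -
    have "0 \<le> dval B D V" unfolding dval_def using that Bpos by (intro sum_nonneg) auto
    moreover have "\<bar>dval B D V\<bar> \<le> B^D - 1" unfolding dval_def
      by (rule digit_bound) (use Bpos that KK K1 in auto)
    ultimately show ?thesis using BD by simp
  qed
  have rx: "0 \<le> x" "x < p" using rng[of XX] dg xd by auto
  have ry: "0 \<le> y" "y < p" using rng[of YY] dg yd by auto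
  have rz: "0 \<le> z" "z < p" using rng[of ZZ] dg zd by auto
  have rw: "0 \<le> w" "w < p" using rng[of WW] dg wd by auto
  have L1: "\<forall>i<D. a * XX i + b * YY i + (-c) * ZZ i + (-d) * WW i = 0"
  proof (rule digits_zero_mod[OF B2 _ _ BD])
    show "\<forall>i<D. \<bar>a * XX i + b * YY i + - c * ZZ i + - d * WW i\<bar> \<le> B - 1"
    proof (intro allI impI)
      fix i assume "i < D"
      then have "\<bar>a * XX i + b * YY i - c * ZZ i - d * WW i\<bar> \<le> 2 * k * K"
        using dg ab sig by (intro lin4_bound) auto
      then show "\<bar>a * XX i + b * YY i + - c * ZZ i + - d * WW i\<bar> \<le> B - 1" using kK by simp
    qed
    have "(\<Sum>i<D. (a * XX i + b * YY i + - c * ZZ i + - d * WW i) * B ^ i) = (a * x + b * y) - (c * z + d * w)"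
      using dval_lin4[of B D a XX b YY "-c" ZZ "-d" WW] xd yd zd wd by (simp add: dval_def)
    then show "p dvd (\<Sum>i<D. (a * XX i + b * YY i + - c * ZZ i + - d * WW i) * B ^ i)" using m1 by simp
  qed
  have L1x: "a * x + b * y = c * z + d * w"
  proof -
    have "dval B D (\<lambda>i. a * XX i + b * YY i + (-c) * ZZ i + (-d) * WW i) = 0" using L1 by (rule dval_zero)
    then show ?thesis using dval_lin4[of B D a XX b YY "-c" ZZ "-d" WW] xd yd zd wd by simp
  qed

  have exd: "\<exists>i<D. V i \<noteq> V' i" if "dval B D V \<noteq> dval B D V'" for V V' :: "nat \<Rightarrow> int"
    using that dval_eqI by blast
  define g where "g = (\<Sum>i<D. XX i * YY i)"
  define h where "h = (\<Sum>i<D. ZZ i * WW i)"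
  have sq: "(\<Sum>i<D. (V i - V' i)\<^sup>2) = 2 * m - 2 * (\<Sum>i<D. V i * V' i)"
    if "(\<Sum>i<D. (V i)\<^sup>2) = m" "(\<Sum>i<D. (V' i)\<^sup>2) = m" for V V' :: "nat \<Rightarrow> int"
  proof -
    have "(\<Sum>i<D. (V i - V' i)\<^sup>2) = (\<Sum>i<D. (V i)\<^sup>2 + (V' i)\<^sup>2 - 2 * (V i * V' i))"
      by (rule sum.cong) (auto simp: power2_eq_square algebra_simps)
    also have "\<dots> = (\<Sum>i<D. (V i)\<^sup>2) + (\<Sum>i<D. (V' i)\<^sup>2) - 2 * (\<Sum>i<D. V i * V' i)"
      by (simp add: sum.distrib sum_subtractf sum_distrib_left)
    finally show ?thesis using that by simp
  qed
  have pos: "(\<Sum>i<D. (V i - V' i)\<^sup>2) > 0" if "\<exists>i<D. V i \<noteq> V' i" for V V' :: "nat \<Rightarrow> int"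
  proof -
    have "(\<Sum>i<D. (V i - V' i)\<^sup>2) \<ge> 0" by (intro sum_nonneg) auto
    moreover have "(\<Sum>i<D. (V i - V' i)\<^sup>2) \<noteq> 0"
      using that by (subst sum_nonneg_eq_0_iff) auto
    ultimately show ?thesis by simp
  qed
  have gm: "m - g > 0"
  proof -
    have "dval B D XX \<noteq> dval B D YY" using dxy xd yd by simp
    then have "(\<Sum>i<D. (XX i - YY i)\<^sup>2) > 0" by (rule pos[OF exd])
    then show ?thesis using sq[OF nX nY] unfolding g_def by linarith
  qed
  have hm: "m - h > 0"
  proof -
    have "dval B D ZZ \<noteq> dval B D WW" using dzw zd wd by simp
    then have "(\<Sum>i<D. (ZZ i - WW i)\<^sup>2) > 0" by (rule pos[OF exd])
    then show ?thesis using sq[OF nZ nW] unfolding h_def by linarith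
  qed
  have E: "(\<Sum>i<D. (a * XX i + b * YY i)\<^sup>2) = (\<Sum>i<D. (c * ZZ i + d * WW i)\<^sup>2)"
  proof (rule sum.cong)
    fix i assume "i \<in> {..<D}"
    then have "a * XX i + b * YY i = c * ZZ i + d * WW i" using L1 by auto
    then show "(a * XX i + b * YY i)\<^sup>2 = (c * ZZ i + d * WW i)\<^sup>2" by simp
  qed simp
  have exp2: "(\<Sum>i<D. (e * V i + f * V' i)\<^sup>2) = e^2 * m + f^2 * m + 2 * e * f * (\<Sum>i<D. V i * V' i)"
    if "(\<Sum>i<D. (V i)\<^sup>2) = m" "(\<Sum>i<D. (V' i)\<^sup>2) = m" for V V' :: "nat \<Rightarrow> int" and e f :: int
  proof -
    have "(\<Sum>i<D. (e * V i + f * V' i)\<^sup>2) = (\<Sum>i<D. e^2 * (V i)\<^sup>2 + f^2 * (V' i)\<^sup>2 + (2 * e * f) * (V i * V' i))"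
      by (rule sum.cong) (auto simp: power2_eq_square algebra_simps)
    also have "\<dots> = e^2 * (\<Sum>i<D. (V i)\<^sup>2) + f^2 * (\<Sum>i<D. (V' i)\<^sup>2) + (2 * e * f) * (\<Sum>i<D. V i * V' i)"
      by (simp add: sum.distrib sum_distrib_left)
    finally show ?thesis using that by simp
  qed
  have E2: "a^2 * m + b^2 * m + 2 * a * b * g = c^2 * m + d^2 * m + 2 * c * d * h"
    using E exp2[OF nX nY, of a b] exp2[OF nZ nW, of c d] unfolding g_def h_def by simp
  have idE: "2 * (c * d * (m-h) - a * b * (m-g)) = ((c+d)^2 - (a+b)^2) * m + (a^2 * m + b^2 * m + 2 * a * b * g) - (c^2 * m + d^2 * m + 2 * c * d * h)"
    by (simp add: algebra_simps power2_eq_square)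
  have abcd_eq: "a * b * (m-g) = c * d * (m-h)" using idE E2 sig by simp
  have abcd_pos: "a * b * c * d > 0"
  proof -
    have "a * b \<noteq> 0" "c * d \<noteq> 0" using nz by auto
    have "(a * b > 0 \<longleftrightarrow> c * d > 0)"
      using abcd_eq gm hm by (metis zero_less_mult_iff mult_less_0_iff not_less_iff_gr_or_eq \<open>a * b \<noteq> 0\<close> \<open>c * d \<noteq> 0\<close>)
    then have "(a * b) * (c * d) > 0" using \<open>a * b \<noteq> 0\<close> \<open>c * d \<noteq> 0\<close>
      by (metis mult_neg_neg mult_pos_pos not_less_iff_gr_or_eq)
    then show ?thesis by (simp add: mult.assoc)
  qed

  have fin: False if "(\<forall>i<D. ZZ i = XX i) \<or> (\<forall>i<D. ZZ i = YY i)"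
    using that dval_eqI[of D ZZ XX B] dval_eqI[of D ZZ YY B] xd yd zd dzx dzy by auto
  have ndv: "\<not> p dvd t" if "t \<noteq> 0" "\<bar>t\<bar> \<le> 3" for t :: int
    using small_dvd[of p t] that p10 by auto
  have a3: "\<bar>a\<bar> \<le> 3" "\<bar>b\<bar> \<le> 3" "\<bar>c\<bar> \<le> 3" "\<bar>d\<bar> \<le> 3" using ab k3 by auto
  have zw_nd: "\<not> p dvd (z - w)"
  proof
    assume "p dvd (z - w)"
    moreover have "\<bar>z - w\<bar> < p" using rz rw by linarith
    ultimately have "z - w = 0" by (rule small_dvd)
    then show False using dzw by simp
  qed
  have id1: "(a+b) * (a * x\<^sup>2+b * y\<^sup>2) - (a * x+b * y)\<^sup>2 = a * b * (x-y)\<^sup>2"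
    by (simp add: algebra_simps power2_eq_square)
  have id2: "(c+d) * (c * z\<^sup>2+d * w\<^sup>2) - (c * z+d * w)\<^sup>2 = c * d * (z-w)\<^sup>2"
    by (simp add: algebra_simps power2_eq_square)
  have quad: "p dvd a * b * (x-y)\<^sup>2 - c * d * (z-w)\<^sup>2"
  proof -
    have "a * b * (x-y)\<^sup>2 - c * d * (z-w)\<^sup>2 = (a+b) * ((a * x\<^sup>2 + b * y\<^sup>2) - (c * z\<^sup>2 + d * w\<^sup>2))"
      using id1 id2 sig L1x by (simp add: algebra_simps)
    then show ?thesis using m2 by simp
  qed
  show False
  proof (cases "a + b = 0")
    case False
    have q2: "p dvd (a * b * (x-y))\<^sup>2 - a * b * c * d * (z-w)\<^sup>2"
    proof -
      have "(a * b * (x-y))\<^sup>2 - a * b * c * d * (z-w)\<^sup>2 = a * b * (a * b * (x-y)\<^sup>2 - c * d * (z-w)\<^sup>2)"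
        by (simp add: algebra_simps power2_eq_square)
      then show ?thesis using quad by simp
    qed
    from enum4[OF nz a3 sig False abcd_pos] show False
    proof
      assume h12: "a * b * c * d = 12"
      have "\<not> p dvd 2" using ndv[of 2] by simp
      then have "\<not> p dvd (2 * (z-w))" using zw_nd prime_dvd_mult_iff[OF pr, of 2 "z-w"] by blast
      then have "coprime p (2 * (z-w))" using pr by (rule prime_imp_coprime[rotated])
      then have "coprime (2 * (z-w)) p" by (simp add: coprime_commute)
      then obtain t where t: "[2 * (z-w) * t = 1] (mod p)" using cong_solve_coprime_int by blast
      then have t': "p dvd 2 * (z-w) * t - 1" by (simp add: cong_iff_dvd_diff)
      define y0 where "y0 = a * b * (x-y) * t"
      have "y0\<^sup>2 - 3 = t\<^sup>2 * ((a * b * (x-y))\<^sup>2 - 12 * (z-w)\<^sup>2) + 3 * ((2 * (z-w) * t - 1) * (2 * (z-w) * t + 1))"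
        unfolding y0_def by (simp add: algebra_simps power2_eq_square)
      moreover have "p dvd t\<^sup>2 * ((a * b * (x-y))\<^sup>2 - 12 * (z-w)\<^sup>2)" using q2 h12 by simp
      moreover have "p dvd 3 * ((2 * (z-w) * t - 1) * (2 * (z-w) * t + 1))" using t' by simp
      ultimately have "p dvd y0\<^sup>2 - 3" by simp
      then have "QuadRes p 3" unfolding QuadRes_def by (auto simp: cong_iff_dvd_diff)
      then show False using nqr by simp
    next
      assume "\<exists>t>0. a * b * c * d = t * t"
      then obtain t where t0: "t > 0" and tt: "a * b * c * d = t * t" by blast
      have pab: "\<bar>a * b\<bar> \<le> k * k" by (rule prod_bound) (use ab in auto)
      have pcd: "\<bar>c * d\<bar> \<le> k * k" by (rule prod_bound) (use ab in auto)
      have "t * t = \<bar>a * b * c * d\<bar>" using tt abcd_pos by simp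
      also have "\<dots> = \<bar>(a * b) * (c * d)\<bar>" by (simp add: mult.assoc)
      also have "\<dots> = \<bar>a * b\<bar> * \<bar>c * d\<bar>" by (rule abs_mult)
      also have "\<dots> \<le> (k * k) * (k * k)" using pab pcd by (intro mult_mono) auto
      finally have "t\<^sup>2 \<le> (k * k)\<^sup>2" by (simp add: power2_eq_square)
      then have tk: "t \<le> k * k" using t0 k1 abs_le_square_iff[of t "k * k"] by simp
      have "(a * b * (x-y))\<^sup>2 - a * b * c * d * (z-w)\<^sup>2 = (a * b * (x-y) - t * (z-w)) * (a * b * (x-y) + t * (z-w))"
        using tt by (simp add: algebra_simps power2_eq_square)
      then have "p dvd (a * b * (x-y) - t * (z-w)) * (a * b * (x-y) + t * (z-w))" using q2 by simp
      then have "p dvd (a * b * (x-y) - t * (z-w)) \<or> p dvd (a * b * (x-y) - (-t) * (z-w))"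
        using pr by (simp add: prime_dvd_mult_iff)
      then obtain Q where Q0: "Q \<noteq> 0" and Qk: "\<bar>Q\<bar> \<le> k * k" and QP: "p dvd a * b * (x-y) - Q * (z-w)"
        using t0 tk by (metis abs_minus_cancel abs_of_pos less_irrefl neg_0_equal_iff_equal)
      define P where "P = a * b"
      have L2: "\<forall>i<D. P * XX i + (-P) * YY i + (-Q) * ZZ i + Q * WW i = 0"
      proof (rule digits_zero_mod[OF B2 _ _ BD])
        show "\<forall>i<D. \<bar>P * XX i + (-P) * YY i + (-Q) * ZZ i + Q * WW i\<bar> \<le> B - 1"
        proof (intro allI impI)
          fix i assume i: "i < D"
          have u1: "\<bar>P * (XX i - YY i)\<bar> \<le> k * k * K" unfolding P_def
            by (rule prod_bound[OF pab]) (use dg i in auto)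
          have u2: "\<bar>Q * (ZZ i - WW i)\<bar> \<le> k * k * K"
            by (rule prod_bound[OF Qk]) (use dg i in auto)
          have "P * XX i + (-P) * YY i + (-Q) * ZZ i + Q * WW i = P * (XX i - YY i) - Q * (ZZ i - WW i)"
            by (simp add: algebra_simps)
          moreover have "2 * k^2 * K = k * k * K + k * k * K" by (simp add: power2_eq_square)
          ultimately show "\<bar>P * XX i + (-P) * YY i + (-Q) * ZZ i + Q * WW i\<bar> \<le> B - 1"
            using u1 u2 k2K by linarith
        qed
        have "(\<Sum>i<D. (P * XX i + (-P) * YY i + (-Q) * ZZ i + Q * WW i) * B ^ i) = a * b * (x-y) - Q * (z-w)"
          using dval_lin4[of B D P XX "-P" YY "-Q" ZZ Q WW] xd yd zd wd
          by (simp add: dval_def P_def algebra_simps)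
        then show "p dvd (\<Sum>i<D. (P * XX i + (-P) * YY i + (-Q) * ZZ i + Q * WW i) * B ^ i)" using QP by simp
      qed
      have "(\<forall>i<D. ZZ i = XX i) \<or> (\<forall>i<D. ZZ i = YY i)"
      proof (rule line_lemma[where s = "(a+b) * Q" and r = "b * Q - d * P"])
        show "(a+b) * Q \<noteq> 0" using False Q0 by simp
        show "\<forall>i<D. (a + b) * Q * ZZ i = (a + b) * Q * XX i - (b * Q - d * P) * (XX i - YY i)"
        proof (intro allI impI)
          fix i assume i: "i < D"
          have e1: "a * XX i + b * YY i + (-c) * ZZ i + (-d) * WW i = 0" using L1 i by blast
          have e2: "P * XX i + (-P) * YY i + (-Q) * ZZ i + Q * WW i = 0" using L2 i by blast
          have "(a+b) * Q * XX i - (b * Q-d * P) * (XX i-YY i) - (c+d) * Q * ZZ i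
              = Q * (a * XX i + b * YY i + (-c) * ZZ i + (-d) * WW i) + d * (P * XX i + (-P) * YY i + (-Q) * ZZ i + Q * WW i)"
            by (simp add: algebra_simps)
          then show "(a + b) * Q * ZZ i = (a + b) * Q * XX i - (b * Q - d * P) * (XX i - YY i)"
            using e1 e2 sig by simp
        qed
        show "(\<Sum>i<D. (XX i)\<^sup>2) = (\<Sum>i<D. (YY i)\<^sup>2)" using nX nY by simp
        show "(\<Sum>i<D. (ZZ i)\<^sup>2) = (\<Sum>i<D. (XX i)\<^sup>2)" using nX nZ by simp
      qed
      then show False by (rule fin)
    qed
  next
    case True
    have bb: "b = -a" and dd: "d = -c" using True sig by auto
    have "c * (z-w) * ((z+w)-(x+y)) = -((a * x\<^sup>2 + b * y\<^sup>2) - (c * z\<^sup>2 + d * w\<^sup>2)) + (x+y) * ((a * x+b * y) - (c * z+d * w))"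
      unfolding bb dd by (simp add: algebra_simps power2_eq_square)
    then have "p dvd c * (z-w) * ((z+w)-(x+y))"
      using dvd_minus_iff[of p "(a * x\<^sup>2 + b * y\<^sup>2) - (c * z\<^sup>2 + d * w\<^sup>2)"] m2 L1x by simp
    then have "p dvd (z+w)-(x+y)" using pr ndv[OF nz(3) a3(3)] zw_nd by (simp add: prime_dvd_mult_iff)
    then have S2: "\<forall>i<D. 1 * ZZ i + 1 * WW i + (-1) * XX i + (-1) * YY i = 0"
    proof (intro digits_zero_mod[OF B2 _ _ BD])
      show "\<forall>i<D. \<bar>1 * ZZ i + 1 * WW i + (-1) * XX i + (-1) * YY i\<bar> \<le> B - 1"
      proof (intro allI impI)
        fix i assume i: "i < D"
        then have "0 \<le> XX i \<and> XX i \<le> K \<and> 0 \<le> YY i \<and> YY i \<le> K \<and> 0 \<le> ZZ i \<and> ZZ i \<le> K \<and> 0 \<le> WW i \<and> WW i \<le> K"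
          using dg by blast
        then show "\<bar>1 * ZZ i + 1 * WW i + (-1) * XX i + (-1) * YY i\<bar> \<le> B - 1"
          using KK unfolding abs_le_iff by linarith
      qed
      assume "p dvd (z+w)-(x+y)"
      moreover have "(\<Sum>i<D. (1 * ZZ i + 1 * WW i + (-1) * XX i + (-1) * YY i) * B ^ i) = (z+w)-(x+y)"
        using dval_lin4[of B D 1 ZZ 1 WW "-1" XX "-1" YY] xd yd zd wd by (simp add: dval_def)
      ultimately show "p dvd (\<Sum>i<D. (1 * ZZ i + 1 * WW i + (-1) * XX i + (-1) * YY i) * B ^ i)" by simp
    qed
    have "(\<forall>i<D. ZZ i = XX i) \<or> (\<forall>i<D. ZZ i = YY i)"
    proof (rule line_lemma[where s = "2 * c" and r = "c - a"])
      show "2 * c \<noteq> 0" using nz by simp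
      show "\<forall>i<D. 2 * c * ZZ i = 2 * c * XX i - (c - a) * (XX i - YY i)"
      proof (intro allI impI)
        fix i assume i: "i < D"
        have e1: "a * XX i + b * YY i + (-c) * ZZ i + (-d) * WW i = 0" using L1 i by blast
        have e2: "1 * ZZ i + 1 * WW i + (-1) * XX i + (-1) * YY i = 0" using S2 i by blast
        have "2 * c * XX i - (c-a) * (XX i-YY i) - 2 * c * ZZ i
            = (a * XX i + b * YY i + (-c) * ZZ i + (-d) * WW i) - c * (1 * ZZ i + 1 * WW i + (-1) * XX i + (-1) * YY i)"
          unfolding bb dd by (simp add: algebra_simps)
        then show "2 * c * ZZ i = 2 * c * XX i - (c - a) * (XX i - YY i)" using e1 e2 by simp
      qed
      show "(\<Sum>i<D. (XX i)\<^sup>2) = (\<Sum>i<D. (YY i)\<^sup>2)" using nX nY by simp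
      show "(\<Sum>i<D. (ZZ i)\<^sup>2) = (\<Sum>i<D. (XX i)\<^sup>2)" using nX nZ by simp
    qed
    then show False by (rule fin)
  qed
qed




lemma sum_supp:
  assumes "finite S" "A = {s\<in>S. e s \<noteq> 0}"
  shows "(\<Sum>s\<in>S. (e s::int) * h s) = (\<Sum>s\<in>A. e s * h s)"
  by (rule sum.mono_neutral_right) (use assms in auto)

lemma sum_supp_bounds:
  fixes e :: "'a \<Rightarrow> int"
  assumes "finite S" "\<forall>s\<in>S. -km \<le> e s \<and> e s \<le> kp" "card {s\<in>S. e s \<noteq> 0} \<le> 2" "0 \<le> km" "0 \<le> kp"
  shows "-2 * km \<le> (\<Sum>s\<in>S. e s) \<and> (\<Sum>s\<in>S. e s) \<le> 2 * kp"
proof -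
  define A where "A = {s\<in>S. e s \<noteq> 0}"
  have eq: "(\<Sum>s\<in>S. e s) = (\<Sum>s\<in>A. e s)" using sum_supp[OF assms(1) A_def, of "\<lambda>_. 1"] by simp
  have cA: "int (card A) \<le> 2" using assms(3) A_def by simp
  have u1: "(\<Sum>s\<in>A. e s) \<le> of_nat (card A) * kp" by (rule sum_bounded_above) (use assms A_def in auto)
  have u2: "of_nat (card A) * kp \<le> 2 * kp" using cA assms(5) by (intro mult_right_mono) auto
  have u: "(\<Sum>s\<in>A. e s) \<le> 2 * kp" using u1 u2 by linarith
  have "of_nat (card A) * (-km) \<le> (\<Sum>s\<in>A. e s)" by (rule sum_bounded_below) (use assms A_def in auto)
  moreover have "2 * (-km) \<le> of_nat (card A) * (-km)" using cA assms(4) by (intro mult_right_mono_neg) auto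
  ultimately show ?thesis using u eq by simp
qed

lemma keylemma:
  fixes S :: "(int \<times> int \<times> int) set" and e e' :: "int \<times> int \<times> int \<Rightarrow> int"
    and kp km K al B p q m :: int and D :: nat
  assumes fin: "finite S"
   and xr: "\<forall>\<sigma>\<in>S. 0 \<le> fst (snd \<sigma>) \<and> fst (snd \<sigma>) < p"
   and inj: "inj_on (\<lambda>\<sigma>. fst (snd \<sigma>)) S"
   and sqc: "\<forall>\<sigma>\<in>S. p dvd snd (snd \<sigma>) - (fst (snd \<sigma>))\<^sup>2"
   and dig: "\<forall>\<sigma>\<in>S. \<exists>XX. (\<forall>i<D. 0 \<le> XX i \<and> XX i \<le> K) \<and> (\<Sum>i<D. (XX i)\<^sup>2) = m \<and> fst (snd \<sigma>) = dval B D XX"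
   and par: "0 \<le> km" "km \<le> kp" "1 \<le> kp" "kp \<le> 3" "1 \<le> K" "2 * kp\<^sup>2 \<le> al" "3 \<le> al" "B = al * K+1"
     "Factorial_Ring.prime p" "B^D \<le> p" "10 \<le> p" "\<not> QuadRes p 3" "q = 3 * kp+2 * km+1"
   and ev: "\<forall>\<sigma>\<in>S. -km \<le> e \<sigma> \<and> e \<sigma> \<le> kp" "card {\<sigma>\<in>S. e \<sigma> \<noteq> 0} \<le> 2"
   and ev': "\<forall>\<sigma>\<in>S. -km \<le> e' \<sigma> \<and> e' \<sigma> \<le> kp" "card {\<sigma>\<in>S. e' \<sigma> \<noteq> 0} \<le> 2"
   and c1: "(\<Sum>\<sigma>\<in>S. e \<sigma>) mod q = (\<Sum>\<sigma>\<in>S. e' \<sigma>) mod q"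
   and c2: "(\<Sum>\<sigma>\<in>S. e \<sigma> * fst (snd \<sigma>)) mod p = (\<Sum>\<sigma>\<in>S. e' \<sigma> * fst (snd \<sigma>)) mod p"
   and c3: "(\<Sum>\<sigma>\<in>S. e \<sigma> * snd (snd \<sigma>)) mod p = (\<Sum>\<sigma>\<in>S. e' \<sigma> * snd (snd \<sigma>)) mod p"
  shows "\<forall>\<sigma>\<in>S. e \<sigma> = e' \<sigma>"
proof -
  define xv where "xv = (\<lambda>\<sigma>::int \<times> int \<times> int. fst (snd \<sigma>))"
  define A where "A = {\<sigma>\<in>S. e \<sigma> \<noteq> 0}"
  define A' where "A' = {\<sigma>\<in>S. e' \<sigma> \<noteq> 0}"
  have sE: "(\<Sum>\<sigma>\<in>S. e \<sigma>) = (\<Sum>\<sigma>\<in>S. e' \<sigma>)"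
  proof -
    have b1: "-2 * km \<le> (\<Sum>\<sigma>\<in>S. e \<sigma>) \<and> (\<Sum>\<sigma>\<in>S. e \<sigma>) \<le> 2 * kp"
      using sum_supp_bounds[OF fin ev(1) ev(2)] par by simp
    have b2: "-2 * km \<le> (\<Sum>\<sigma>\<in>S. e' \<sigma>) \<and> (\<Sum>\<sigma>\<in>S. e' \<sigma>) \<le> 2 * kp"
      using sum_supp_bounds[OF fin ev'(1) ev'(2)] par by simp
    have "q dvd (\<Sum>\<sigma>\<in>S. e \<sigma>) - (\<Sum>\<sigma>\<in>S. e' \<sigma>)" using c1 by (simp add: mod_eq_dvd_iff)
    moreover have "\<bar>(\<Sum>\<sigma>\<in>S. e \<sigma>) - (\<Sum>\<sigma>\<in>S. e' \<sigma>)\<bar> < q" using b1 b2 par by linarith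
    ultimately have "(\<Sum>\<sigma>\<in>S. e \<sigma>) - (\<Sum>\<sigma>\<in>S. e' \<sigma>) = 0" by (rule small_dvd)
    then show ?thesis by simp
  qed
  have sq_e: "p dvd (\<Sum>\<sigma>\<in>S. g \<sigma> * snd (snd \<sigma>)) - (\<Sum>\<sigma>\<in>S. g \<sigma> * (xv \<sigma>)\<^sup>2)" for g :: "int \<times> int \<times> int \<Rightarrow> int"
  proof -
    have "(\<Sum>\<sigma>\<in>S. g \<sigma> * snd (snd \<sigma>)) - (\<Sum>\<sigma>\<in>S. g \<sigma> * (xv \<sigma>)\<^sup>2) = (\<Sum>\<sigma>\<in>S. g \<sigma> * (snd (snd \<sigma>) - (xv \<sigma>)\<^sup>2))"
      by (simp add: sum_subtractf algebra_simps)
    moreover have "p dvd (\<Sum>\<sigma>\<in>S. g \<sigma> * (snd (snd \<sigma>) - (xv \<sigma>)\<^sup>2))"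
      using sqc unfolding xv_def by (intro dvd_sum) auto
    ultimately show ?thesis by simp
  qed
  have m1: "p dvd (\<Sum>\<sigma>\<in>S. e \<sigma> * xv \<sigma>) - (\<Sum>\<sigma>\<in>S. e' \<sigma> * xv \<sigma>)"
    using c2 unfolding xv_def by (simp add: mod_eq_dvd_iff)
  have m2: "p dvd (\<Sum>\<sigma>\<in>S. e \<sigma> * (xv \<sigma>)\<^sup>2) - (\<Sum>\<sigma>\<in>S. e' \<sigma> * (xv \<sigma>)\<^sup>2)"
  proof -
    have "p dvd (\<Sum>\<sigma>\<in>S. e \<sigma> * snd (snd \<sigma>)) - (\<Sum>\<sigma>\<in>S. e' \<sigma> * snd (snd \<sigma>))"
      using c3 by (simp add: mod_eq_dvd_iff)
    then have "p dvd ((\<Sum>\<sigma>\<in>S. e \<sigma> * snd (snd \<sigma>)) - (\<Sum>\<sigma>\<in>S. e' \<sigma> * snd (snd \<sigma>)))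
       - ((\<Sum>\<sigma>\<in>S. e \<sigma> * snd (snd \<sigma>)) - (\<Sum>\<sigma>\<in>S. e \<sigma> * (xv \<sigma>)\<^sup>2))
       + ((\<Sum>\<sigma>\<in>S. e' \<sigma> * snd (snd \<sigma>)) - (\<Sum>\<sigma>\<in>S. e' \<sigma> * (xv \<sigma>)\<^sup>2))"
      by (rule dvd_add[OF dvd_diff[OF _ sq_e[of e]] sq_e[of e']])
    then show ?thesis by simp
  qed

  define f where "f = (\<lambda>\<sigma>. e \<sigma> - e' \<sigma>)"
  define T where "T = {\<sigma>\<in>S. f \<sigma> \<noteq> 0}"
  have finT: "finite T" "T \<subseteq> S" using fin unfolding T_def by auto
  have sumT: "(\<Sum>\<sigma>\<in>S. f \<sigma> * h \<sigma>) = (\<Sum>\<sigma>\<in>T. f \<sigma> * h \<sigma>)" for h :: "int \<times> int \<times> int \<Rightarrow> int"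
    by (rule sum_supp[OF fin T_def])
  have fS: "(\<Sum>\<sigma>\<in>S. f \<sigma> * h \<sigma>) = (\<Sum>\<sigma>\<in>S. e \<sigma> * h \<sigma>) - (\<Sum>\<sigma>\<in>S. e' \<sigma> * h \<sigma>)" for h :: "int \<times> int \<times> int \<Rightarrow> int"
    unfolding f_def by (simp add: sum_subtractf algebra_simps)
  have f0: "(\<Sum>\<sigma>\<in>T. f \<sigma>) = 0" using fS[of "\<lambda>_. 1"] sumT[of "\<lambda>_. 1"] sE by simp
  have f1: "p dvd (\<Sum>\<sigma>\<in>T. f \<sigma> * xv \<sigma>)" using fS[of xv] sumT[of xv] m1 by simp
  have f2: "p dvd (\<Sum>\<sigma>\<in>T. f \<sigma> * (xv \<sigma>)\<^sup>2)" using fS[of "\<lambda>\<sigma>. (xv \<sigma>)\<^sup>2"] sumT[of "\<lambda>\<sigma>. (xv \<sigma>)\<^sup>2"] m2 by simp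
  have fb: "\<bar>f \<sigma>\<bar> < p" if "\<sigma> \<in> S" for \<sigma>
  proof -
    have "-km \<le> e \<sigma> \<and> e \<sigma> \<le> kp" "-km \<le> e' \<sigma> \<and> e' \<sigma> \<le> kp" using ev(1) ev'(1) that by blast+
    then show ?thesis using par(1,2,4,11) unfolding f_def abs_less_iff by linarith
  qed
  have fnz: "f \<sigma> \<noteq> 0" if "\<sigma> \<in> T" for \<sigma> using that T_def by simp
  have xvr: "0 \<le> xv \<sigma> \<and> xv \<sigma> < p" if "\<sigma> \<in> S" for \<sigma> using xr that unfolding xv_def by simp
  have xvi: "xv \<sigma> \<noteq> xv \<tau>" if "\<sigma> \<in> S" "\<tau> \<in> S" "\<sigma> \<noteq> \<tau>" for \<sigma> \<tau>
    using inj that unfolding xv_def inj_on_def by blast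
  have finA: "finite A" "finite A'" "A \<subseteq> S" "A' \<subseteq> S" using fin unfolding A_def A'_def by auto
  have TA: "T \<subseteq> A \<union> A'" unfolding T_def A_def A'_def f_def by auto
  have cA: "card A \<le> 2" "card A' \<le> 2" using ev(2) ev'(2) unfolding A_def A'_def by auto
  have cU: "card T \<le> card (A \<union> A')" using TA finA by (intro card_mono) auto
  have cU2: "card (A \<union> A') \<le> card A + card A'" by (rule card_Un_le)
  have "T = {}"
  proof (rule ccontr)
    assume "T \<noteq> {}"
    then have "card T \<ge> 1" using finT by (simp add: Suc_le_eq card_gt_0_iff)
    then consider "card T = 1" | "card T = 2" | "card T = 3" | "card T = 4" using cU cU2 cA by linarith
    then show False
    proof cases
      case 1
      then obtain t where "T = {t}" by (rule card_1_singletonE)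
      then show False using f0 fnz by auto
    next
      case 2
      then obtain t1 t2 where T2: "T = {t1,t2}" "t1 \<noteq> t2" by (auto simp: card_2_iff)
      have inS: "t1 \<in> S" "t2 \<in> S" using T2 finT by auto
      have s0: "f t1 + f t2 = 0" using f0 T2 by simp
      have "p dvd f t1 * xv t1 + f t2 * xv t2" using f1 T2 by simp
      moreover have "f t2 = - f t1" using s0 by linarith
      then have "f t1 * xv t1 + f t2 * xv t2 = f t1 * (xv t1 - xv t2)"
        by (simp add: algebra_simps)
      ultimately have "p dvd f t1 * (xv t1 - xv t2)" by simp
      moreover have "t1 \<in> T" using T2 by simp
      moreover have "0 \<le> xv t1" "xv t1 < p" "0 \<le> xv t2" "xv t2 < p"
        using xvr[OF inS(1)] xvr[OF inS(2)] by auto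
      ultimately show False
        using sup2[OF par(9) fnz[of t1] fb[OF inS(1)] _ _ _ _ xvi[OF inS T2(2)]] by blast
    next
      case 3
      then obtain t1 t2 t3 where T3: "T = {t1,t2,t3}" "t1 \<noteq> t2" "t2 \<noteq> t3" "t1 \<noteq> t3"
        by (auto simp: card_3_iff)
      have inS: "t1 \<in> S" "t2 \<in> S" "t3 \<in> S" using T3 finT by auto
      have s0: "f t1 + f t2 + f t3 = 0" using f0 T3 by simp
      have d1: "p dvd f t1 * xv t1 + f t2 * xv t2 + f t3 * xv t3" using f1 T3 by (simp add: add.assoc)
      have d2: "p dvd f t1 * (xv t1)\<^sup>2 + f t2 * (xv t2)\<^sup>2 + f t3 * (xv t3)\<^sup>2" using f2 T3 by (simp add: add.assoc)
      show False
        using sup3[OF par(9) fnz[of t1] fnz[of t3] fb[of t1] fb[of t3] s0 _ _ _ _ xvi[OF inS(1,3) T3(4)] d1 d2]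
          xvr[OF inS(1)] xvr[OF inS(3)] inS T3 by auto
    next
      case 4
      have cA2: "card A = 2" "card A' = 2" "card (A \<union> A') = card A + card A'"
        using 4 cU cU2 cA by linarith+
      have "card (A \<inter> A') = 0" using card_Un_Int[OF finA(1,2)] cA2 by simp
      then have disj: "A \<inter> A' = {}" using finA by simp
      obtain s1 s2 where As: "A = {s1,s2}" "s1 \<noteq> s2" using cA2(1) by (auto simp: card_2_iff)
      obtain s3 s4 where As': "A' = {s3,s4}" "s3 \<noteq> s4" using cA2(2) by (auto simp: card_2_iff)
      have inS: "s1 \<in> S" "s2 \<in> S" "s3 \<in> S" "s4 \<in> S" using As As' finA by auto
      have n31: "s3 \<noteq> s1" "s3 \<noteq> s2" using disj As As' by auto
      have sumA: "(\<Sum>\<sigma>\<in>S. e \<sigma> * h \<sigma>) = e s1 * h s1 + e s2 * h s2" for h :: "int \<times> int \<times> int \<Rightarrow> int"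
        using sum_supp[OF fin A_def, of h] As by simp
      have sumA': "(\<Sum>\<sigma>\<in>S. e' \<sigma> * h \<sigma>) = e' s3 * h s3 + e' s4 * h s4" for h :: "int \<times> int \<times> int \<Rightarrow> int"
        using sum_supp[OF fin A'_def, of h] As' by simp
      have sig: "e s1 + e s2 = e' s3 + e' s4" using sE sumA[of "\<lambda>_. 1"] sumA'[of "\<lambda>_. 1"] by simp
      have mm1: "p dvd (e s1 * xv s1 + e s2 * xv s2) - (e' s3 * xv s3 + e' s4 * xv s4)"
        using m1 sumA[of xv] sumA'[of xv] by simp
      have mm2: "p dvd (e s1 * (xv s1)\<^sup>2 + e s2 * (xv s2)\<^sup>2) - (e' s3 * (xv s3)\<^sup>2 + e' s4 * (xv s4)\<^sup>2)"
        using m2 sumA[of "\<lambda>\<sigma>. (xv \<sigma>)\<^sup>2"] sumA'[of "\<lambda>\<sigma>. (xv \<sigma>)\<^sup>2"] by simp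
      obtain X1 where X1: "\<forall>i<D. 0 \<le> X1 i \<and> X1 i \<le> K" "(\<Sum>i<D. (X1 i)\<^sup>2) = m" "xv s1 = dval B D X1"
        using dig inS(1) unfolding xv_def by blast
      obtain X2 where X2: "\<forall>i<D. 0 \<le> X2 i \<and> X2 i \<le> K" "(\<Sum>i<D. (X2 i)\<^sup>2) = m" "xv s2 = dval B D X2"
        using dig inS(2) unfolding xv_def by blast
      obtain X3 where X3: "\<forall>i<D. 0 \<le> X3 i \<and> X3 i \<le> K" "(\<Sum>i<D. (X3 i)\<^sup>2) = m" "xv s3 = dval B D X3"
        using dig inS(3) unfolding xv_def by blast
      obtain X4 where X4: "\<forall>i<D. 0 \<le> X4 i \<and> X4 i \<le> K" "(\<Sum>i<D. (X4 i)\<^sup>2) = m" "xv s4 = dval B D X4"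
        using dig inS(4) unfolding xv_def by blast
      have dg: "\<forall>i<D. 0 \<le> X1 i \<and> X1 i \<le> K \<and> 0 \<le> X2 i \<and> X2 i \<le> K \<and> 0 \<le> X3 i \<and> X3 i \<le> K \<and> 0 \<le> X4 i \<and> X4 i \<le> K"
        using X1(1) X2(1) X3(1) X4(1) by blast
      have nz: "e s1 \<noteq> 0" "e s2 \<noteq> 0" "e' s3 \<noteq> 0" "e' s4 \<noteq> 0" using As As' unfolding A_def A'_def by auto
      have bnd: "\<bar>u\<bar> \<le> kp" if "-km \<le> u \<and> u \<le> kp" for u using that par(1,2) by linarith
      have ab: "\<bar>e s1\<bar> \<le> kp" "\<bar>e s2\<bar> \<le> kp" "\<bar>e' s3\<bar> \<le> kp" "\<bar>e' s4\<bar> \<le> kp"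
        using bnd ev(1) ev'(1) inS by blast+
      show False
        by (rule core4[OF par(3,4,5,6,7,8,9,10,11,12) dg X1(2) X2(2) X3(2) X4(2) X1(3) X2(3) X3(3) X4(3)
              xvi[OF inS(1,2) As(2)] xvi[OF inS(3,4) As'(2)] xvi[OF inS(3,1) n31(1)] xvi[OF inS(3,2) n31(2)]
              nz ab sig mm1 mm2])
    qed
  qed
  then show ?thesis unfolding T_def f_def by auto
qed



abbreviation GG :: "nat \<Rightarrow> nat \<Rightarrow> (int \<times> int \<times> int) monoid" where
  "GG q p \<equiv> integer_mod_group q \<times>\<times> (integer_mod_group p \<times>\<times> integer_mod_group p)"

lemma GG_group: "group (GG q p)"
  by (intro DirProd_group group_integer_mod_group)

lemma GG_comm: "comm_group (GG q p)"
proof -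
  interpret group "GG q p" by (rule GG_group)
  show ?thesis
    by (rule group_comm_groupI) (auto simp: mult_DirProd' add.commute)
qed

lemma fst_hom: "group H \<Longrightarrow> group K \<Longrightarrow> fst \<in> hom (H \<times>\<times> K) H"
  using hom_pairwise[of id "H \<times>\<times> K" H K] by (simp add: hom_def)
lemma snd_hom: "group H \<Longrightarrow> group K \<Longrightarrow> snd \<in> hom (H \<times>\<times> K) K"
  using hom_pairwise[of id "H \<times>\<times> K" H K] by (simp add: hom_def)

lemma GG_pow:
  assumes "s \<in> carrier (GG q p)"
  shows "s [^]\<^bsub>GG q p\<^esub> (k::int) = ((k * fst s) mod q, (k * fst (snd s)) mod p, (k * snd (snd s)) mod p)"
proof -
  have g1: "group (integer_mod_group p \<times>\<times> integer_mod_group p)" by (intro DirProd_group group_integer_mod_group)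
  have h1: "fst (s [^]\<^bsub>GG q p\<^esub> k) = fst s [^]\<^bsub>integer_mod_group q\<^esub> k"
    by (rule hom_int_pow[OF fst_hom[OF group_integer_mod_group g1] assms GG_group group_integer_mod_group])
  have h2: "snd (s [^]\<^bsub>GG q p\<^esub> k) = snd s [^]\<^bsub>integer_mod_group p \<times>\<times> integer_mod_group p\<^esub> k"
    by (rule hom_int_pow[OF snd_hom[OF group_integer_mod_group g1] assms GG_group g1])
  have sc: "snd s \<in> carrier (integer_mod_group p \<times>\<times> integer_mod_group p)" using assms by auto
  have h3: "fst (snd s [^]\<^bsub>integer_mod_group p \<times>\<times> integer_mod_group p\<^esub> k) = fst (snd s) [^]\<^bsub>integer_mod_group p\<^esub> k"
    by (rule hom_int_pow[OF fst_hom[OF group_integer_mod_group group_integer_mod_group] sc g1 group_integer_mod_group])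
  have h4: "snd (snd s [^]\<^bsub>integer_mod_group p \<times>\<times> integer_mod_group p\<^esub> k) = snd (snd s) [^]\<^bsub>integer_mod_group p\<^esub> k"
    by (rule hom_int_pow[OF snd_hom[OF group_integer_mod_group group_integer_mod_group] sc g1 group_integer_mod_group])
  show ?thesis
    by (metis h1 h2 h3 h4 int_pow_integer_mod_group prod.collapse)
qed

lemma GG_finprod:
  assumes "finite A" "A \<subseteq> carrier (GG q p)" "q > 0" "p > 0"
  shows "finprod (GG q p) (\<lambda>s. s [^]\<^bsub>GG q p\<^esub> (e s)) A =
    ((\<Sum>s\<in>A. e s * fst s) mod q, (\<Sum>s\<in>A. e s * fst (snd s)) mod p, (\<Sum>s\<in>A. e s * snd (snd s)) mod p)"
  using assms(1,2)
proof (induction A rule: finite_induct)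
  case empty
  then show ?case by (simp add: finprod_def)
next
  case (insert a F)
  interpret comm_group "GG q p" by (rule GG_comm)
  have ac: "a \<in> carrier (GG q p)" using insert by auto
  have "finprod (GG q p) (\<lambda>s. s [^]\<^bsub>GG q p\<^esub> (e s)) (insert a F)
     = a [^]\<^bsub>GG q p\<^esub> (e a) \<otimes>\<^bsub>GG q p\<^esub> finprod (GG q p) (\<lambda>s. s [^]\<^bsub>GG q p\<^esub> (e s)) F"
    using insert ac by (intro finprod_insert) (auto simp del: carrier_DirProd intro!: int_pow_closed)
  also have "\<dots> = ((\<Sum>s\<in>insert a F. e s * fst s) mod q, (\<Sum>s\<in>insert a F. e s * fst (snd s)) mod p, (\<Sum>s\<in>insert a F. e s * snd (snd s)) mod p)"
    using insert ac by (simp add: GG_pow mult_DirProd' mod_add_eq)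
  finally show ?case .
qed




theorem theorem12:
  fixes kp km D K p :: nat
  assumes "km \<le> kp" and "kp \<le> 3" and "kp + km \<ge> 1"
    and "D \<ge> 2" and "K \<ge> 1"
    and "Factorial_Ring.prime p" and "p mod 12 = 5 \<or> p mod 12 = 7"
    and "(max (2 * kp\<^sup>2) 3 * K + 1) ^ D \<le> p"
  shows "\<forall>m < D * K\<^sup>2.
    diamond_ge
      (integer_mod_group (3 * kp + 2 * km + 1) \<times>\<times>
         (integer_mod_group p \<times>\<times> integer_mod_group p))
      ({- int km .. int kp} - {0}) 2
      ((\<lambda>x::int. (1::int, x mod int p, x\<^sup>2 mod int p)) `
        {(\<Sum>i<D. x i * int (max (2 * kp\<^sup>2) 3 * K + 1) ^ i) | x :: nat \<Rightarrow> int.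
           (\<forall>i<D. 0 \<le> x i \<and> x i \<le> int K) \<and> (\<Sum>i<D. (x i)\<^sup>2) = int m})"
proof (intro allI impI)
  fix m assume mlt: "m < D * K\<^sup>2"
  define al where "al = max (2 * kp\<^sup>2) 3"
  define Bn where "Bn = max (2 * kp\<^sup>2) 3 * K + 1"
  have Bn_al: "Bn = al * K + 1" by (simp add: Bn_def al_def)
  define C where "C = {(\<Sum>i<D. x i * int (max (2 * kp\<^sup>2) 3 * K + 1) ^ i) | x :: nat \<Rightarrow> int.
           (\<forall>i<D. 0 \<le> x i \<and> x i \<le> int K) \<and> (\<Sum>i<D. (x i)\<^sup>2) = int m}"
  define sf where "sf = (\<lambda>x::int. (1::int, x mod int p, x\<^sup>2 mod int p))"
  define S where "S = sf ` C"
  define q where "q = 3 * kp + 2 * km + 1"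
  define MM where "MM = ({- int km .. int kp} - {0})"
  have kp1: "1 \<le> kp" using assms(1,3) by simp
  have al1: "2 * kp\<^sup>2 \<le> al" "3 \<le> al" unfolding al_def by auto
  have aK: "al * 1 \<le> al * K" using assms(5) by (rule mult_le_mono2)
  have aK2: "1 * K \<le> al * K" using al1(2) by (intro mult_le_mono1) simp
  have aK': "al \<le> al * K" using aK by simp
  have Bn4: "Bn \<ge> 4" using al1(2) aK' Bn_al by linarith
  have "Bn ^ 2 \<le> Bn ^ D" using Bn4 assms(4) by (intro power_increasing) auto
  moreover have "4 * 4 \<le> Bn * Bn" using Bn4 by (intro mult_le_mono) auto
  then have "16 \<le> Bn ^ 2" by (simp add: power2_eq_square)
  ultimately have p16: "16 \<le> p" using assms(8) unfolding Bn_def by linarith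
  have prp: "Factorial_Ring.prime (int p)" using assms(6) by simp
  have nqr: "\<not> QuadRes (int p) 3" using three_nonres assms(6,7) by blast
  have BDp: "int Bn ^ D \<le> int p" using assms(8) unfolding Bn_def by (metis of_nat_le_iff of_nat_power)
  have Cdig: "\<exists>Xd. (\<forall>i<D. 0 \<le> Xd i \<and> Xd i \<le> int K) \<and> (\<Sum>i<D. (Xd i)\<^sup>2) = int m \<and> x = dval (int Bn) D Xd"
    if "x \<in> C" for x using that unfolding C_def dval_def Bn_def by auto
  have Crng: "0 \<le> x \<and> x < int p" if xC: "x \<in> C" for x
  proof -
    obtain Xd where Xd: "\<forall>i<D. 0 \<le> Xd i \<and> Xd i \<le> int K" "x = dval (int Bn) D Xd" using Cdig[OF xC] by blast
    have KB0: "K \<le> al * K" using aK2 by simp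
    have KB1: "int K \<le> int al * int K" using KB0 by (metis of_nat_le_iff of_nat_mult)
    have KB2: "int Bn = int al * int K + 1" using Bn_al by simp
    have KB: "int K \<le> int Bn - 1" using KB1 KB2 by linarith
    have "0 \<le> x" unfolding Xd(2) dval_def using Xd(1) by (intro sum_nonneg) auto
    moreover have "\<bar>x\<bar> \<le> int Bn ^ D - 1" unfolding Xd(2) dval_def
      by (rule digit_bound) (use Xd(1) KB Bn4 in auto)
    ultimately show ?thesis using BDp unfolding abs_le_iff by linarith
  qed
  have finC: "finite C"
  proof (rule finite_subset)
    show "C \<subseteq> {0..<int p}" using Crng by auto
  qed simp
  have finS: "finite S" unfolding S_def using finC by simp
  have Sform: "\<exists>x\<in>C. \<sigma> = (1, x, x\<^sup>2 mod int p)" if \<sigma>S: "\<sigma> \<in> S" for \<sigma>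
  proof -
    obtain x where x: "x \<in> C" "\<sigma> = sf x" using \<sigma>S unfolding S_def by blast
    have "x mod int p = x" using Crng[OF x(1)] by simp
    then show ?thesis using x unfolding sf_def by auto
  qed
  have q4: "q \<ge> 4" unfolding q_def using kp1 by simp
  have Scar: "S \<subseteq> carrier (GG q p)"
  proof
    fix \<sigma> assume "\<sigma> \<in> S"
    then obtain x where x: "x \<in> C" "\<sigma> = (1, x, x\<^sup>2 mod int p)" using Sform by blast
    have "(1::int) \<in> carrier (integer_mod_group q)" using q4 by simp
    moreover have "x \<in> carrier (integer_mod_group p)" using Crng[OF x(1)] p16
      by (simp add: carrier_integer_mod_group)
    moreover have "x\<^sup>2 mod int p \<in> carrier (integer_mod_group p)" using p16
      by (simp add: carrier_integer_mod_group)
    ultimately show "\<sigma> \<in> carrier (GG q p)" using x(2) by simp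
  qed
  have lc: "lin_comb (GG q p) e S = ((\<Sum>\<sigma>\<in>S. e \<sigma>) mod int q, (\<Sum>\<sigma>\<in>S. e \<sigma> * fst (snd \<sigma>)) mod int p, (\<Sum>\<sigma>\<in>S. e \<sigma> * snd (snd \<sigma>)) mod int p)"
    for e :: "int \<times> int \<times> int \<Rightarrow> int"
  proof -
    have "lin_comb (GG q p) e S = ((\<Sum>s\<in>S. e s * fst s) mod int q, (\<Sum>s\<in>S. e s * fst (snd s)) mod int p, (\<Sum>s\<in>S. e s * snd (snd s)) mod int p)"
      unfolding lin_comb_def by (rule GG_finprod[OF finS Scar]) (use q4 p16 in auto)
    moreover have "(\<Sum>s\<in>S. e s * fst s) = (\<Sum>s\<in>S. e s)"
    proof (rule sum.cong)
      fix s assume "s \<in> S"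
      then obtain x where "s = (1, x, x\<^sup>2 mod int p)" using Sform by blast
      then show "e s * fst s = e s" by simp
    qed simp
    ultimately show ?thesis by simp
  qed
  have xr: "\<forall>\<sigma>\<in>S. 0 \<le> fst (snd \<sigma>) \<and> fst (snd \<sigma>) < int p"
  proof
    fix \<sigma> assume "\<sigma> \<in> S"
    then obtain x where x: "x \<in> C" "\<sigma> = (1, x, x\<^sup>2 mod int p)" using Sform by blast
    show "0 \<le> fst (snd \<sigma>) \<and> fst (snd \<sigma>) < int p" using Crng[OF x(1)] x(2) by simp
  qed
  have inj: "inj_on (\<lambda>\<sigma>. fst (snd \<sigma>)) S"
  proof (rule inj_onI)
    fix \<sigma> \<tau> assume "\<sigma> \<in> S" "\<tau> \<in> S" "fst (snd \<sigma>) = fst (snd \<tau>)"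
    then obtain x y where "\<sigma> = (1, x, x\<^sup>2 mod int p)" "\<tau> = (1, y, y\<^sup>2 mod int p)" "fst (snd \<sigma>) = fst (snd \<tau>)"
      using Sform[of \<sigma>] Sform[of \<tau>] by blast
    then show "\<sigma> = \<tau>" by simp
  qed
  have sqc: "\<forall>\<sigma>\<in>S. int p dvd snd (snd \<sigma>) - (fst (snd \<sigma>))\<^sup>2"
  proof
    fix \<sigma> assume "\<sigma> \<in> S"
    then obtain x where x: "\<sigma> = (1, x, x\<^sup>2 mod int p)" using Sform by blast
    have "(x\<^sup>2 mod int p) mod int p = (x\<^sup>2) mod int p" by simp
    then have "int p dvd x\<^sup>2 mod int p - x\<^sup>2" by (simp only: mod_eq_dvd_iff)
    then show "int p dvd snd (snd \<sigma>) - (fst (snd \<sigma>))\<^sup>2" using x by simp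
  qed
  have dig: "\<forall>\<sigma>\<in>S. \<exists>Xd. (\<forall>i<D. 0 \<le> Xd i \<and> Xd i \<le> int K) \<and> (\<Sum>i<D. (Xd i)\<^sup>2) = int m \<and> fst (snd \<sigma>) = dval (int Bn) D Xd"
  proof
    fix \<sigma> assume "\<sigma> \<in> S"
    then obtain x where x: "x \<in> C" "\<sigma> = (1, x, x\<^sup>2 mod int p)" using Sform by blast
    show "\<exists>Xd. (\<forall>i<D. 0 \<le> Xd i \<and> Xd i \<le> int K) \<and> (\<Sum>i<D. (Xd i)\<^sup>2) = int m \<and> fst (snd \<sigma>) = dval (int Bn) D Xd"
      using Cdig[OF x(1)] x(2) by simp
  qed
  have al_i1: "int (2 * kp\<^sup>2) \<le> int al" using al1(1) by (simp only: of_nat_le_iff)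
  have al_i2: "int 3 \<le> int al" using al1(2) by (simp only: of_nat_le_iff)
  have par: "0 \<le> int km" "int km \<le> int kp" "1 \<le> int kp" "int kp \<le> 3" "1 \<le> int K"
    "2 * (int kp)\<^sup>2 \<le> int al" "3 \<le> int al" "int Bn = int al * int K + 1"
    "Factorial_Ring.prime (int p)" "int Bn ^ D \<le> int p" "10 \<le> int p" "\<not> QuadRes (int p) 3"
    "int q = 3 * int kp + 2 * int km + 1"
    using assms(1,2,5) kp1 al_i1 al_i2 Bn_al prp BDp p16 nqr unfolding q_def by simp_all
  have key: "\<forall>\<sigma>\<in>S. e \<sigma> = e' \<sigma>"
    if "\<forall>\<sigma>\<in>S. - int km \<le> e \<sigma> \<and> e \<sigma> \<le> int kp" "card {\<sigma>\<in>S. e \<sigma> \<noteq> 0} \<le> 2"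
       "\<forall>\<sigma>\<in>S. - int km \<le> e' \<sigma> \<and> e' \<sigma> \<le> int kp" "card {\<sigma>\<in>S. e' \<sigma> \<noteq> 0} \<le> 2"
       "lin_comb (GG q p) e S = lin_comb (GG q p) e' S"
    for e e' :: "int \<times> int \<times> int \<Rightarrow> int"
  proof (rule keylemma[OF finS xr inj sqc dig par that(1-4)])
    show "(\<Sum>\<sigma>\<in>S. e \<sigma>) mod int q = (\<Sum>\<sigma>\<in>S. e' \<sigma>) mod int q" using that(5) unfolding lc by simp
    show "(\<Sum>\<sigma>\<in>S. e \<sigma> * fst (snd \<sigma>)) mod int p = (\<Sum>\<sigma>\<in>S. e' \<sigma> * fst (snd \<sigma>)) mod int p"
      using that(5) unfolding lc by simp
    show "(\<Sum>\<sigma>\<in>S. e \<sigma> * snd (snd \<sigma>)) mod int p = (\<Sum>\<sigma>\<in>S. e' \<sigma> * snd (snd \<sigma>)) mod int p"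
      using that(5) unfolding lc by simp
  qed
  have MM0: "MM \<union> {0} = {- int km .. int kp}" unfolding MM_def by auto
  have adm: "e \<in> S \<rightarrow>\<^sub>E {- int km .. int kp} \<and> (\<forall>\<sigma>\<in>S. - int km \<le> e \<sigma> \<and> e \<sigma> \<le> int kp)
      \<and> 1 \<le> card {\<sigma>\<in>S. e \<sigma> \<noteq> 0} \<and> card {\<sigma>\<in>S. e \<sigma> \<noteq> 0} \<le> 2"
    if eA: "e \<in> adm_coeffs MM 2 S" for e
  proof -
    have e1: "e \<in> S \<rightarrow>\<^sub>E {- int km .. int kp}" and e2: "1 \<le> card {\<sigma>\<in>S. e \<sigma> \<noteq> 0} \<and> card {\<sigma>\<in>S. e \<sigma> \<noteq> 0} \<le> 2"
      using eA unfolding adm_coeffs_def MM0 by simp_all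
    have "\<forall>\<sigma>\<in>S. - int km \<le> e \<sigma> \<and> e \<sigma> \<le> int kp"
    proof
      fix \<sigma> assume "\<sigma> \<in> S"
      then have "e \<sigma> \<in> {- int km .. int kp}" using e1 by (rule PiE_mem[rotated])
      then show "- int km \<le> e \<sigma> \<and> e \<sigma> \<le> int kp" by simp
    qed
    then show ?thesis using e1 e2 by blast
  qed
  have zero_lc: "lin_comb (GG q p) (\<lambda>_. 0) S = \<one>\<^bsub>GG q p\<^esub>" unfolding lc by simp
  have main: "diamond_ge (GG q p) MM 2 S"
    unfolding diamond_ge_def
  proof (intro conjI ballI impI)
    show "finite S" by (rule finS)
    show "S \<subseteq> carrier (GG q p)" by (rule Scar)
  next
    fix e assume e: "e \<in> adm_coeffs MM 2 S"
    show "lin_comb (GG q p) e S \<noteq> \<one>\<^bsub>GG q p\<^esub>"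
    proof
      assume "lin_comb (GG q p) e S = \<one>\<^bsub>GG q p\<^esub>"
      then have "lin_comb (GG q p) e S = lin_comb (GG q p) (\<lambda>_. 0) S" using zero_lc by simp
      then have "\<forall>\<sigma>\<in>S. e \<sigma> = 0" using key[of e "\<lambda>_. 0"] adm[OF e] by simp
      then have "{\<sigma>\<in>S. e \<sigma> \<noteq> 0} = {}" by blast
      then have "card {\<sigma>\<in>S. e \<sigma> \<noteq> 0} = 0" by (simp only: card.empty)
      then show False using adm[OF e] by linarith
    qed
  next
    fix e e' assume e: "e \<in> adm_coeffs MM 2 S" and e': "e' \<in> adm_coeffs MM 2 S" and ne: "e \<noteq> e'"
    show "lin_comb (GG q p) e S \<noteq> lin_comb (GG q p) e' S"
    proof
      assume "lin_comb (GG q p) e S = lin_comb (GG q p) e' S"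
      then have "\<forall>\<sigma>\<in>S. e \<sigma> = e' \<sigma>" using key[of e e'] adm[OF e] adm[OF e'] by blast
      moreover have "e \<in> S \<rightarrow>\<^sub>E {- int km .. int kp}" "e' \<in> S \<rightarrow>\<^sub>E {- int km .. int kp}"
        using adm[OF e] adm[OF e'] by blast+
      ultimately have "e = e'" by (intro PiE_ext[of e S "\<lambda>_. {- int km .. int kp}" e']) auto
      then show False using ne by simp
    qed
  qed
  show "diamond_ge (integer_mod_group (3 * kp + 2 * km + 1) \<times>\<times>
         (integer_mod_group p \<times>\<times> integer_mod_group p))
      ({- int km .. int kp} - {0}) 2
      ((\<lambda>x::int. (1::int, x mod int p, x\<^sup>2 mod int p)) `
        {(\<Sum>i<D. x i * int (max (2 * kp\<^sup>2) 3 * K + 1) ^ i) | x :: nat \<Rightarrow> int.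
           (\<forall>i<D. 0 \<le> x i \<and> x i \<le> int K) \<and> (\<Sum>i<D. (x i)\<^sup>2) = int m})"
    using main unfolding S_def sf_def C_def q_def MM_def .
qed


end
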